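(* For the full shift $(\Sigma,\sigma)$, there is a dense Mycielski subset $S\subset\Sigma$ with $\sigma(S)\subset S$ which is Banach scrambled for $\sigma$.
   Context: $\Sigma=\{0,1\}^{\mathbb{Z}_+}$ with the product topology (and a compatible metric $d$) and shift map $\sigma(x)_n=x_{n+1}$. A set $F\subset\mathbb{Z}_+$ has Banach density one if for every $\lambda<1$ there is $N\ge1$ with $\#(F\cap I)\ge\lambda\,\#(I)$ for every interval of integers $I\subset\mathbb{Z}_+$ with $\#(I)\ge N$. A pair $(x,y)$ is Banach proximal if for every $\varepsilon>0$ the set $\{n: d(\sigma^nx,\sigma^ny)<\varepsilon\}$ has Banach density one; it is asymptotic if $d(\sigma^nx,\sigma^ny)\to0$. A subset with at least two points is Banach scrambled if every pair of distinct points in it is Banach proximal but not asymptotic. A Mycielski set is a countable union of Cantor sets. *)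

theory Defs
  imports "HOL-Analysis.Analysis"
begin

definition Sigma_top :: "(nat \<Rightarrow> bool) topology" where
  "Sigma_top = product_topology (\<lambda>_. discrete_topology (UNIV :: bool set)) UNIV"

definition shift :: "(nat \<Rightarrow> bool) \<Rightarrow> (nat \<Rightarrow> bool)" where
  "shift x = (\<lambda>n. x (Suc n))"

definition sdist :: "(nat \<Rightarrow> bool) \<Rightarrow> (nat \<Rightarrow> bool) \<Rightarrow> real" where
  "sdist x y = (if x = y then 0 else (1/2) ^ (LEAST n. x n \<noteq> y n))"

definition banach_density_one :: "nat set \<Rightarrow> bool" where
  "banach_density_one F \<longleftrightarrow>
     (\<forall>l::real. l < 1 \<longrightarrow> (\<exists>N::nat. N \<ge> 1 \<and>
        (\<forall>a m. m \<ge> N \<longrightarrow> real (card (F \<inter> {a..<a+m})) \<ge> l * real m)))"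

definition banach_proximal :: "(nat \<Rightarrow> bool) \<Rightarrow> (nat \<Rightarrow> bool) \<Rightarrow> bool" where
  "banach_proximal x y \<longleftrightarrow>
     (\<forall>e>0. banach_density_one {n. sdist ((shift ^^ n) x) ((shift ^^ n) y) < e})"

definition asymptotic :: "(nat \<Rightarrow> bool) \<Rightarrow> (nat \<Rightarrow> bool) \<Rightarrow> bool" where
  "asymptotic x y \<longleftrightarrow> ((\<lambda>n. sdist ((shift ^^ n) x) ((shift ^^ n) y)) \<longlonglongrightarrow> 0)"

definition banach_scrambled :: "(nat \<Rightarrow> bool) set \<Rightarrow> bool" where
  "banach_scrambled S \<longleftrightarrow> (\<exists>x\<in>S. \<exists>y\<in>S. x \<noteq> y) \<and>
     (\<forall>x\<in>S. \<forall>y\<in>S. x \<noteq> y \<longrightarrow> banach_proximal x y \<and> \<not> asymptotic x y)"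

definition cantor_set :: "(nat \<Rightarrow> bool) set \<Rightarrow> bool" where
  "cantor_set C \<longleftrightarrow> Sigma_top homeomorphic_space (subtopology Sigma_top C)"

definition mycielski_set :: "(nat \<Rightarrow> bool) set \<Rightarrow> bool" where
  "mycielski_set S \<longleftrightarrow> (\<exists>C :: nat \<Rightarrow> (nat \<Rightarrow> bool) set. (\<forall>i. cantor_set (C i)) \<and> S = (\<Union>i. C i))"

end

theory Submission imports Defs "HOL-Library.Nat_Bijection" "HOL-Library.Countable"
begin

definition W :: "nat \<Rightarrow> bool list" where "W = from_nat"

definition code :: "nat \<Rightarrow> (nat \<Rightarrow> bool) \<Rightarrow> nat \<Rightarrow> bool" where
  "code i b j = (case prod_decode j of (u,m) \<Rightarrow> if odd u then u div 2 = i else b (u div 2))"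

definition X :: "nat \<Rightarrow> (nat \<Rightarrow> bool) \<Rightarrow> nat \<Rightarrow> bool" where
  "X i b n = (if n < length (W i) then W i ! n else (\<exists>j. n = 2^j \<and> code i b j))"

lemma funpow_shift: "(shift ^^ k) x n = x (n + k)"
  by (induction k arbitrary: n) (auto simp: shift_def)

lemma topspace_Sigma [simp]: "topspace Sigma_top = UNIV"
  by (auto simp: Sigma_top_def)

lemma X_pow: "2^j \<ge> length (W i) \<Longrightarrow> X i b (2^j) = code i b j"
  unfolding X_def by (auto simp: power_inject_exp)

lemma X_nonpow: "n \<ge> length (W i) \<Longrightarrow> n \<notin> range (\<lambda>j. (2::nat)^j) \<Longrightarrow> \<not> X i b n"
  unfolding X_def by auto

lemma X_comp: "(\<exists>c. \<forall>b. X i b n = c) \<or> (\<exists>r. \<forall>b. X i b n = b r)"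
proof (cases "n < length (W i)")
  case True then show ?thesis by (auto simp: X_def)
next
  case False
  show ?thesis
  proof (cases "\<exists>j. n = 2^j")
    case True
    then obtain j where j: "n = 2^j" by blast
    then have e: "\<And>b. X i b n = code i b j" using False X_pow by auto
    obtain u m where um: "prod_decode j = (u,m)" by fastforce
    show ?thesis
    proof (cases "odd u")
      case True then show ?thesis using e um by (auto simp: code_def)
    next
      case False then show ?thesis using e um by (auto simp: code_def)
    qed
  next
    case False2: False
    then show ?thesis using False by (auto simp: X_def)
  qed
qed

lemma cont_comp:
  assumes "(\<exists>c. \<forall>b. f b = c) \<or> (\<exists>r. \<forall>b. f b = b r)"
  shows "continuous_map Sigma_top (discrete_topology (UNIV::bool set)) f"
  using assms
proof
  assume "\<exists>c. \<forall>b. f b = c"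
  then obtain c where "\<forall>b. f b = c" by (elim exE)
  then have "f = (\<lambda>b. c)" by (simp add: fun_eq_iff)
  then show ?thesis by simp
next
  assume "\<exists>r. \<forall>b. f b = b r"
  then obtain r where "\<forall>b. f b = b r" by (elim exE)
  then have "f = (\<lambda>b. b r)" by (simp add: fun_eq_iff)
  then show ?thesis unfolding Sigma_top_def
    using continuous_map_product_projection[of r UNIV "\<lambda>_. discrete_topology (UNIV::bool set)"] by simp
qed

lemma cont_X: "continuous_map Sigma_top Sigma_top (\<lambda>b. (shift ^^ k) (X i b))"
  apply (subst (2) Sigma_top_def)
  unfolding continuous_map_componentwise_UNIV funpow_shift
  by (intro allI cont_comp X_comp)

lemma code_even: "code i b (prod_encode (2*r, m)) = b r"
  by (simp add: code_def)

lemma code_odd: "code i b (prod_encode (2*r+1, m)) = (r = i)"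
  by (simp add: code_def)

lemma pe_ge: "m \<le> prod_encode (u, m)"
proof -
  have "u + m \<le> (u+m)*(u+m)" using le_square by blast
  then have "2*m \<le> (u + m + (u + m) * (u + m))" by linarith
  then show ?thesis by (simp add: prod_encode_def triangle_def)
qed

lemma big_pow: "m \<le> j \<Longrightarrow> m < (2::nat)^j"
  using less_exp[of j] by linarith

lemma inj_X: "inj (\<lambda>b. (shift ^^ k) (X i b))"
proof (rule injI)
  fix b b' assume h: "(shift ^^ k) (X i b) = (shift ^^ k) (X i b')"
  show "b = b'"
  proof
    fix r
    define j where "j = prod_encode (2*r, k + length (W i))"
    have "k + length (W i) < 2^j" using big_pow pe_ge j_def by blast
    then have "X i b (2^j - k + k) = X i b' (2^j - k + k)" using h funpow_shift by metis
    moreover have "2^j - k + k = (2::nat)^j" using \<open>k + length (W i) < 2^j\<close> by simp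
    ultimately have "X i b (2^j) = X i b' (2^j)" by simp
    then show "b r = b' r" using X_pow \<open>k + length (W i) < 2^j\<close> code_even j_def
      by (metis less_imp_le trans_less_add2 le_add2 order.trans less_or_eq_imp_le)
  qed
qed

lemma cantor_X: "cantor_set (range (\<lambda>b. (shift ^^ k) (X i b)))"
  unfolding cantor_set_def
proof (rule homeomorphic_map_imp_homeomorphic_space)
  show "homeomorphic_map Sigma_top (subtopology Sigma_top (range (\<lambda>b. (shift ^^ k) (X i b)))) (\<lambda>b. (shift ^^ k) (X i b))"
  proof (rule continuous_imp_homeomorphic_map)
    show "continuous_map Sigma_top (subtopology Sigma_top (range (\<lambda>b. (shift ^^ k) (X i b)))) (\<lambda>b. (shift ^^ k) (X i b))"
      using cont_X by (simp add: continuous_map_in_subtopology)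
    show "compact_space Sigma_top" unfolding Sigma_top_def
      by (simp add: compact_space_product_topology compact_space_discrete_topology)
    show "Hausdorff_space (subtopology Sigma_top (range (\<lambda>b. (shift ^^ k) (X i b))))"
      unfolding Sigma_top_def by (simp add: Hausdorff_space_subtopology Hausdorff_space_product_topology)
    show "(\<lambda>b. (shift ^^ k) (X i b)) ` topspace Sigma_top = topspace (subtopology Sigma_top (range (\<lambda>b. (shift ^^ k) (X i b))))"
      by simp
    show "inj_on (\<lambda>b. (shift ^^ k) (X i b)) (topspace Sigma_top)" using inj_X by (simp add: inj_on_def inj_def)
  qed
qed

abbreviation P2 :: "nat set" where "P2 \<equiv> range (\<lambda>j. (2::nat)^j)"

lemma pow_count:
  assumes M: "M \<ge> 1"
  shows "real (card {n\<in>{a..<a+M}. n \<in> P2}) \<le> log 2 M + 2"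
proof -
  define Q where "Q = {n\<in>{a..<a+M}. n \<in> P2}"
  have fQ: "finite Q" unfolding Q_def by auto
  have sub: "Q \<subseteq> (\<lambda>j. 2^j) ` {..< nat \<lceil>log 2 M\<rceil>} \<union> (Q \<inter> {M..})"
  proof
    fix x assume x: "x \<in> Q"
    show "x \<in> (\<lambda>j. 2^j) ` {..< nat \<lceil>log 2 M\<rceil>} \<union> (Q \<inter> {M..})"
    proof (cases "x < M")
      case True
      from x obtain j where j: "x = 2^j" unfolding Q_def by auto
      have "real j = log 2 (2^j)" by (simp add: log_nat_power)
      also have "\<dots> < log 2 M"
      proof -
        have "(2::real)^j < real M" using True j by (metis of_nat_less_iff of_nat_numeral of_nat_power)
        then show ?thesis by (subst log_less_cancel_iff) auto
      qed
      finally have "real j < \<lceil>log 2 M\<rceil>" by linarith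
      then have "j < nat \<lceil>log 2 M\<rceil>" by linarith
      then show ?thesis using j by auto
    next
      case False then show ?thesis using x by auto
    qed
  qed
  have c1: "card (Q \<inter> {M..}) \<le> 1"
  proof -
    have "\<forall>x\<in>Q \<inter> {M..}. \<forall>y\<in>Q \<inter> {M..}. x = y"
    proof (intro ballI, rule ccontr)
      fix x y assume x: "x \<in> Q \<inter> {M..}" and y: "y \<in> Q \<inter> {M..}" and ne: "x \<noteq> y"
      have gen: "False" if x: "x \<in> Q \<inter> {M..}" and y: "y \<in> Q \<inter> {M..}" and lt: "x < y" for x y
      proof -
        from x obtain p where p: "x = 2^p" unfolding Q_def by auto
        from y obtain q where q: "y = 2^q" unfolding Q_def by auto
        have "p < q" using lt p q by simp
        then have "2 * 2^p \<le> (2::nat)^q" by (metis Suc_leI power_Suc power_increasing_iff one_less_numeral_iff semiring_norm(76))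
        then have "2 * x \<le> y" using p q by simp
        moreover have "y < a + M" "a \<le> x" "M \<le> x" using x y unfolding Q_def by auto
        ultimately show False by linarith
      qed
      show False using gen[OF x y] gen[OF y x] ne by linarith
    qed
    then show ?thesis using card_le_Suc0_iff_eq[of "Q \<inter> {M..}"] fQ by auto
  qed
  have "card Q \<le> card ((\<lambda>j. (2::nat)^j) ` {..< nat \<lceil>log 2 M\<rceil>} \<union> (Q \<inter> {M..}))"
    by (rule card_mono[OF _ sub]) (use fQ in auto)
  also have "\<dots> \<le> card ((\<lambda>j. (2::nat)^j) ` {..< nat \<lceil>log 2 M\<rceil>}) + card (Q \<inter> {M..})"
    by (rule card_Un_le)
  also have "\<dots> \<le> nat \<lceil>log 2 M\<rceil> + 1"
    using c1 card_image_le[of "{..< nat \<lceil>log 2 M\<rceil>}" "\<lambda>j. (2::nat)^j"] by simp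
  finally have "real (card Q) \<le> real (nat \<lceil>log 2 M\<rceil>) + 1" by linarith
  moreover have "log 2 M \<ge> 0" using M by simp
  ultimately have "real (card Q) \<le> log 2 M + 2" by linarith
  then show ?thesis unfolding Q_def .
qed

lemma shifted_count:
  assumes M: "M \<ge> 1"
  shows "real (card {n\<in>{a..<a+M}. n + s \<in> P2}) \<le> log 2 M + 2"
proof -
  have "(\<lambda>n. n + s) ` {n\<in>{a..<a+M}. n + s \<in> P2} \<subseteq> {n\<in>{a+s..<a+s+M}. n \<in> P2}" by auto
  then have "card ((\<lambda>n. n + s) ` {n\<in>{a..<a+M}. n + s \<in> P2}) \<le> card {n\<in>{a+s..<a+s+M}. n \<in> P2}"
    by (intro card_mono) auto
  moreover have "card ((\<lambda>n. n + s) ` {n\<in>{a..<a+M}. n + s \<in> P2}) = card {n\<in>{a..<a+M}. n + s \<in> P2}"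
    by (rule card_image) (auto simp: inj_on_def)
  ultimately show ?thesis using pow_count[OF M, of "a+s"] by linarith
qed

lemma lim_aux: "(\<lambda>M::nat. (c + d * (log 2 (real M) + 2)) / real M) \<longlonglongrightarrow> 0"
proof -
  have e: "(c + d * (log 2 (real M) + 2)) / real M = (c + 2*d) / real M + d * (log 2 (real M) / real M)" for M
    by (simp add: add_divide_distrib algebra_simps)
  have "(\<lambda>M::nat. (c + 2*d) / real M + d * (log 2 (real M) / real M)) \<longlonglongrightarrow> 0 + d * 0"
    by (intro tendsto_add tendsto_mult tendsto_const lim_const_over_n lim_log_over_n)
  then show ?thesis unfolding e by simp
qed

definition good :: "nat \<Rightarrow> nat \<Rightarrow> nat \<Rightarrow> nat \<Rightarrow> nat set" where
  "good c0 k k' L = {n. \<forall>t<L. c0 \<le> n+t \<and> n+t+k \<notin> P2 \<and> n+t+k' \<notin> P2}"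

lemma good_bd1: "banach_density_one (good c0 k k' L)"
  unfolding banach_density_one_def
proof (intro allI impI)
  fix l :: real assume l: "l < 1"
  let ?c = "real c0" and ?d = "2 * real L"
  have "eventually (\<lambda>M::nat. (?c + ?d * (log 2 (real M) + 2)) / real M < 1 - l) sequentially"
    using lim_aux[of ?c ?d] l by (intro order_tendstoD(2)) auto
  then obtain N0 where N0: "\<And>M. M \<ge> N0 \<Longrightarrow> (?c + ?d * (log 2 (real M) + 2)) / real M < 1 - l"
    unfolding eventually_sequentially by blast
  define N where "N = max N0 1"
  show "\<exists>N\<ge>1. \<forall>a m. N \<le> m \<longrightarrow> l * real m \<le> real (card (good c0 k k' L \<inter> {a..<a + m}))"
  proof (intro exI[of _ N] conjI allI impI)
    show "1 \<le> N" unfolding N_def by simp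
    fix a M assume M: "N \<le> M"
    have M1: "M \<ge> 1" and MN0: "M \<ge> N0" using M unfolding N_def by auto
    define I where "I = {a..<a+M}"
    define G where "G = good c0 k k' L"
    have sub: "I - G \<subseteq> {n\<in>I. n < c0} \<union> (\<Union>t\<in>{..<L}. {n\<in>I. n+(t+k) \<in> P2} \<union> {n\<in>I. n+(t+k') \<in> P2})"
      unfolding G_def good_def by (auto simp: add.assoc)
    have fI: "finite I" unfolding I_def by simp
    have "card (I - G) \<le> card ({n\<in>I. n < c0} \<union> (\<Union>t\<in>{..<L}. {n\<in>I. n+(t+k) \<in> P2} \<union> {n\<in>I. n+(t+k') \<in> P2}))"
      by (rule card_mono[OF _ sub]) (use fI in auto)
    also have "\<dots> \<le> card {n\<in>I. n < c0} + card (\<Union>t\<in>{..<L}. {n\<in>I. n+(t+k) \<in> P2} \<union> {n\<in>I. n+(t+k') \<in> P2})"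
      by (rule card_Un_le)
    also have "\<dots> \<le> card {n\<in>I. n < c0} + (\<Sum>t\<in>{..<L}. card ({n\<in>I. n+(t+k) \<in> P2} \<union> {n\<in>I. n+(t+k') \<in> P2}))"
      by (rule add_left_mono[OF card_UN_le]) simp
    finally have e0: "card (I - G) \<le> card {n\<in>I. n < c0} + (\<Sum>t\<in>{..<L}. card ({n\<in>I. n+(t+k) \<in> P2} \<union> {n\<in>I. n+(t+k') \<in> P2}))" .
    have e1: "real (card (I - G)) \<le> real (card {n\<in>I. n < c0} + (\<Sum>t\<in>{..<L}. card ({n\<in>I. n+(t+k) \<in> P2} \<union> {n\<in>I. n+(t+k') \<in> P2})))"
      using e0 by (simp only: of_nat_le_iff)
    also have "\<dots> = real (card {n\<in>I. n < c0}) + (\<Sum>t\<in>{..<L}. real (card ({n\<in>I. n+(t+k) \<in> P2} \<union> {n\<in>I. n+(t+k') \<in> P2})))"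
      by (simp only: of_nat_add of_nat_sum)
    finally have e1: "real (card (I - G)) \<le> real (card {n\<in>I. n < c0}) + (\<Sum>t\<in>{..<L}. real (card ({n\<in>I. n+(t+k) \<in> P2} \<union> {n\<in>I. n+(t+k') \<in> P2})))" .
    have e2: "real (card {n\<in>I. n < c0}) \<le> ?c"
    proof -
      have "card {n\<in>I. n < c0} \<le> card {..<c0}" by (rule card_mono) auto
      then show ?thesis by simp
    qed
    have e3: "real (card ({n\<in>I. n+(t+k) \<in> P2} \<union> {n\<in>I. n+(t+k') \<in> P2})) \<le> 2 * (log 2 M + 2)" for t
    proof -
      have "card ({n\<in>I. n+(t+k) \<in> P2} \<union> {n\<in>I. n+(t+k') \<in> P2}) \<le> card {n\<in>I. n+(t+k) \<in> P2} + card {n\<in>I. n+(t+k') \<in> P2}"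
        by (rule card_Un_le)
      then have "real (card ({n\<in>I. n+(t+k) \<in> P2} \<union> {n\<in>I. n+(t+k') \<in> P2})) \<le> real (card {n\<in>I. n+(t+k) \<in> P2} + card {n\<in>I. n+(t+k') \<in> P2})"
        by (simp only: of_nat_le_iff)
      then show ?thesis using shifted_count[OF M1, of a "t+k"] shifted_count[OF M1, of a "t+k'"]
        unfolding I_def by simp
    qed
    have "(\<Sum>t\<in>{..<L}. real (card ({n\<in>I. n+(t+k) \<in> P2} \<union> {n\<in>I. n+(t+k') \<in> P2}))) \<le> real (card {..<L}) * (2 * (log 2 M + 2))"
      by (rule sum_bounded_above) (use e3 in auto)
    moreover have "real (card {..<L}) * (2 * (log 2 M + 2)) = ?d * (log 2 M + 2)" by simp
    ultimately have bad: "real (card (I - G)) \<le> ?c + ?d * (log 2 M + 2)" using e1 e2 by linarith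
    have Mpos: "real M > 0" using M1 by simp
    have "(?c + ?d * (log 2 (real M) + 2)) < (1 - l) * real M"
      using N0[OF MN0] Mpos by (simp add: divide_less_eq)
    moreover have "card I = card (I \<inter> G) + card (I - G)" using card_Int_Diff[OF fI] .
    moreover have "card I = M" unfolding I_def by simp
    ultimately have rM: "real M = real (card (I \<inter> G)) + real (card (I - G))" by simp
    have "(1-l) * real M = real M - l * real M" by (simp add: algebra_simps)
    then have "l * real M \<le> real (card (I \<inter> G))" using bad rM
      \<open>(?c + ?d * (log 2 (real M) + 2)) < (1 - l) * real M\<close> by linarith
    then show "l * real M \<le> real (card (good c0 k k' L \<inter> {a..<a + M}))"
      unfolding I_def G_def by (simp add: Int_commute)
  qed
qed

lemma bd1_mono: "F \<subseteq> F' \<Longrightarrow> banach_density_one F \<Longrightarrow> banach_density_one F'"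
  unfolding banach_density_one_def
proof (intro allI impI)
  fix l :: real assume sub: "F \<subseteq> F'" and h: "\<forall>l<1. \<exists>N\<ge>1. \<forall>a m. N \<le> m \<longrightarrow> l * real m \<le> real (card (F \<inter> {a..<a + m}))" and l: "l < 1"
  from h l obtain N where N: "N \<ge> 1" "\<forall>a m. N \<le> m \<longrightarrow> l * real m \<le> real (card (F \<inter> {a..<a + m}))" by blast
  show "\<exists>N\<ge>1. \<forall>a m. N \<le> m \<longrightarrow> l * real m \<le> real (card (F' \<inter> {a..<a + m}))"
  proof (intro exI[of _ N] conjI allI impI)
    fix a m assume "N \<le> m"
    then have "l * real m \<le> real (card (F \<inter> {a..<a + m}))" using N by blast
    also have "card (F \<inter> {a..<a + m}) \<le> card (F' \<inter> {a..<a + m})" by (rule card_mono) (use sub in auto)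
    finally show "l * real m \<le> real (card (F' \<inter> {a..<a + m}))" by simp
  qed (use N in auto)
qed

lemma sdist_small:
  assumes agree: "\<forall>t<L. u (n+t) = v (n+t)" and L: "(1/2)^L < e" and e: "e > 0"
  shows "sdist ((shift^^n) u) ((shift^^n) v) < e"
proof (cases "(shift^^n) u = (shift^^n) v")
  case True then show ?thesis by (simp add: sdist_def e)
next
  case False
  then obtain m where m: "(shift^^n) u m \<noteq> (shift^^n) v m" by blast
  define m0 where "m0 = (LEAST m. (shift^^n) u m \<noteq> (shift^^n) v m)"
  have m0: "(shift^^n) u m0 \<noteq> (shift^^n) v m0" unfolding m0_def by (rule LeastI[of _ m]) (rule m)
  have "m0 \<ge> L"
  proof (rule ccontr)
    assume "\<not> L \<le> m0"
    then have "u (n+m0) = v (n+m0)" using agree by auto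
    then show False using m0 by (simp add: funpow_shift add.commute)
  qed
  then have "(1/2::real)^m0 \<le> (1/2)^L" by (rule power_decreasing) auto
  moreover have "sdist ((shift^^n) u) ((shift^^n) v) = (1/2)^m0" using False unfolding sdist_def m0_def by simp
  ultimately show ?thesis using L by linarith
qed

lemma sdist_one:
  assumes "u n \<noteq> v n"
  shows "sdist ((shift^^n) u) ((shift^^n) v) = 1"
proof -
  have d: "(shift^^n) u 0 \<noteq> (shift^^n) v 0" using assms by (simp add: funpow_shift)
  then have "(shift^^n) u \<noteq> (shift^^n) v" by auto
  moreover have "(LEAST m. (shift^^n) u m \<noteq> (shift^^n) v m) = 0" using d by (simp add: Least_eq_0)
  ultimately show ?thesis by (simp add: sdist_def)
qed

lemma not_asym:
  assumes "\<forall>N. \<exists>n\<ge>N. u n \<noteq> v n"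
  shows "\<not> asymptotic u v"
proof
  assume "asymptotic u v"
  then have "eventually (\<lambda>n. sdist ((shift ^^ n) u) ((shift ^^ n) v) < 1/2) sequentially"
    unfolding asymptotic_def by (intro order_tendstoD(2)) auto
  then obtain N where N0: "\<forall>n\<ge>N. sdist ((shift ^^ n) u) ((shift ^^ n) v) < 1/2"
    unfolding eventually_sequentially by (elim exE)
  note N = N0[rule_format]
  have "\<exists>n\<ge>N. u n \<noteq> v n" using assms by (rule spec)
  then obtain n where "n \<ge> N" "u n \<noteq> v n" by auto
  then have "sdist ((shift ^^ n) u) ((shift ^^ n) v) = 1" by (intro sdist_one)
  then show False using N[OF \<open>n \<ge> N\<close>] by simp
qed

definition pt :: "nat \<Rightarrow> nat \<Rightarrow> (nat \<Rightarrow> bool) \<Rightarrow> nat \<Rightarrow> bool" where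
  "pt i k b = (shift ^^ k) (X i b)"

lemma pt_eq: "pt i k b n = X i b (n + k)"
  by (simp add: pt_def funpow_shift)

lemma X_support: "X i b m \<Longrightarrow> m < length (W i) \<or> m \<in> P2"
  unfolding X_def by (auto split: if_splits)

lemma proximal: "banach_proximal (pt i k b) (pt i' k' b')"
  unfolding banach_proximal_def
proof (intro allI impI)
  fix e :: real assume e: "e > 0"
  obtain L where L: "(1/2::real)^L < e" using real_arch_pow_inv[OF e, of "1/2"] by auto
  have "good (length (W i) + length (W i')) k k' L \<subseteq> {n. sdist ((shift ^^ n) (pt i k b)) ((shift ^^ n) (pt i' k' b')) < e}"
  proof
    fix n assume n: "n \<in> good (length (W i) + length (W i')) k k' L"
    have "\<forall>t<L. pt i k b (n+t) = pt i' k' b' (n+t)"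
    proof (intro allI impI)
      fix t assume t: "t < L"
      have h: "length (W i) + length (W i') \<le> n+t" "n+t+k \<notin> P2" "n+t+k' \<notin> P2"
        using n t unfolding good_def by auto
      have "\<not> X i b (n+t+k)" using X_support[of i b "n+t+k"] h by auto
      moreover have "\<not> X i' b' (n+t+k')" using X_support[of i' b' "n+t+k'"] h by auto
      ultimately show "pt i k b (n+t) = pt i' k' b' (n+t)" by (simp add: pt_eq)
    qed
    then show "n \<in> {n. sdist ((shift ^^ n) (pt i k b)) ((shift ^^ n) (pt i' k' b')) < e}"
      using sdist_small[OF _ L e] by blast
  qed
  then show "banach_density_one {n. sdist ((shift ^^ n) (pt i k b)) ((shift ^^ n) (pt i' k' b')) < e}"
    using bd1_mono good_bd1 by blast
qed

lemma nonpow1: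
  assumes d: "0 < d" "2 * d < (2::nat)^j"
  shows "2^j + d \<notin> P2"
proof
  assume "2^j + d \<in> P2"
  then obtain p where p: "2^j + d = (2::nat)^p" by auto
  then have "(2::nat)^j < 2^p" using d by linarith
  then have "j < p" using power_strict_increasing_iff[of "2::nat"] by simp
  then have "(2::nat)^(Suc j) \<le> 2^p" by (intro power_increasing) auto
  then show False using p d by simp
qed

lemma nonpow2:
  assumes d: "0 < d" "2 * d < (2::nat)^j"
  shows "2^j - d \<notin> P2"
proof
  assume "2^j - d \<in> P2"
  then obtain p where p: "2^j - d = (2::nat)^p" by auto
  then have "(2::nat)^p < 2^j" using d by linarith
  then have "p < j" using power_strict_increasing_iff[of "2::nat"] by simp
  then have "(2::nat)^(Suc p) \<le> 2^j" by (intro power_increasing) auto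
  then show False using p d by simp
qed

lemma differ:
  fixes i i' k k' N :: nat and b b' :: "nat \<Rightarrow> bool"
  assumes ne: "(i,k,b) \<noteq> (i',k',b')"
  shows "\<exists>n\<ge>N. pt i k b n \<noteq> pt i' k' b' n"
proof -
  define B where "B = N + k + k' + length (W i) + length (W i')"
  have big: "\<And>u. 2*B + 1 < (2::nat)^(prod_encode (u, 2*B+1))"
    by (intro big_pow pe_ge)
  show ?thesis
  proof (cases "k = k'")
    case False
    define j where "j = prod_encode (2*i+1, 2*B+1)"
    have bj: "2*B+1 < (2::nat)^j" unfolding j_def by (rule big)
    define n where "n = 2^j - k"
    have nk: "n + k = 2^j" using bj unfolding n_def B_def by simp
    have "pt i k b n = True" using X_pow[of i j b] bj code_odd[of i b i "2*B+1"] unfolding pt_eq nk j_def B_def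
      by simp
    moreover have "\<not> pt i' k' b' n"
    proof -
      have ge: "n + k' \<ge> length (W i')" using bj unfolding n_def B_def by simp
      have "n + k' \<notin> P2"
      proof (cases "k < k'")
        case True
        then have "n + k' = 2^j + (k' - k)" using nk by simp
        then show ?thesis using nonpow1[of "k'-k" j] True bj unfolding B_def by simp
      next
        case False2: False
        then have "n + k' = 2^j - (k - k')" using nk \<open>k \<noteq> k'\<close> by simp
        then show ?thesis using nonpow2[of "k-k'" j] False2 \<open>k \<noteq> k'\<close> bj unfolding B_def by simp
      qed
      then show ?thesis using X_nonpow[OF ge] by (simp add: pt_eq)
    qed
    moreover have "n \<ge> N" using bj unfolding n_def B_def by simp
    ultimately show ?thesis by auto
  next
    case True
    show ?thesis
    proof (cases "i = i'")
      case False
      define j where "j = prod_encode (2*i+1, 2*B+1)"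
      have bj: "2*B+1 < (2::nat)^j" unfolding j_def by (rule big)
      define n where "n = 2^j - k"
      have nk: "n + k = 2^j" using bj unfolding n_def B_def by simp
      have "pt i k b n = True" using X_pow[of i j b] bj code_odd[of i b i "2*B+1"] unfolding pt_eq nk j_def B_def
        by simp
      moreover have "\<not> pt i' k' b' n" using X_pow[of i' j b'] bj code_odd[of i' b' i "2*B+1"] False
        unfolding pt_eq True[symmetric] nk j_def B_def by simp
      moreover have "n \<ge> N" using bj unfolding n_def B_def by simp
      ultimately show ?thesis by auto
    next
      case True2: True
      then have "b \<noteq> b'" using ne True by simp
      then obtain r where r: "b r \<noteq> b' r" by blast
      define j where "j = prod_encode (2*r, 2*B+1)"
      have bj: "2*B+1 < (2::nat)^j" unfolding j_def by (rule big)
      define n where "n = 2^j - k"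
      have nk: "n + k = 2^j" using bj unfolding n_def B_def by simp
      have "pt i k b n = b r" using X_pow[of i j b] bj code_even[of i b r "2*B+1"] unfolding pt_eq nk j_def B_def
        by simp
      moreover have "pt i' k' b' n = b' r" using X_pow[of i' j b'] bj code_even[of i' b' r "2*B+1"]
        unfolding pt_eq True[symmetric] nk j_def B_def by simp
      moreover have "n \<ge> N" using bj unfolding n_def B_def by simp
      ultimately show ?thesis using r by auto
    qed
  qed
qed

theorem mainTheorem6:
  shows "\<exists>S. mycielski_set S \<and> Sigma_top closure_of S = topspace Sigma_top
           \<and> shift ` S \<subseteq> S \<and> banach_scrambled S"
proof -
  define S where "S = {pt i k b | i k b. True}"
  define C where "C = (\<lambda>n. case prod_decode n of (i,k) \<Rightarrow> range (\<lambda>b. pt i k b))"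
  have myc: "mycielski_set S"
    unfolding mycielski_set_def
  proof (intro exI[of _ C] conjI allI)
    fix n show "cantor_set (C n)"
      unfolding C_def pt_def using cantor_X by (auto split: prod.splits)
  next
    show "S = (\<Union>i. C i)"
    proof
      show "S \<subseteq> (\<Union>i. C i)"
      proof
        fix x assume "x \<in> S"
        then obtain i k b where x: "x = pt i k b" unfolding S_def by auto
        then have "x \<in> C (prod_encode (i,k))" unfolding C_def by simp
        then show "x \<in> (\<Union>i. C i)" by blast
      qed
      show "(\<Union>i. C i) \<subseteq> S" unfolding C_def S_def by (auto split: prod.splits)
    qed
  qed
  have dense: "Sigma_top closure_of S = topspace Sigma_top"
    unfolding dense_intersects_open
  proof (intro allI impI)
    fix T assume T: "openin Sigma_top T \<and> T \<noteq> {}"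
    then obtain z where z: "z \<in> T" by blast
    have oT: "openin (product_topology (\<lambda>_. discrete_topology (UNIV :: bool set)) (UNIV::nat set)) T"
      using T unfolding Sigma_top_def by simp
    obtain U where U: "finite {n \<in> UNIV. U n \<noteq> topspace (discrete_topology (UNIV::bool set))}"
      "z \<in> Pi\<^sub>E UNIV U" "Pi\<^sub>E UNIV U \<subseteq> T"
      using openin_product_topology_alt[THEN iffD1, OF oT, rule_format, OF z] by (elim exE conjE) simp
    have "finite {n. U n \<noteq> UNIV}" using U(1) by simp
    then obtain L where L: "{n. U n \<noteq> UNIV} \<subseteq> {..<L}" using finite_nat_bounded by blast
    define i where "i = to_nat (map z [0..<L])"
    have Wi: "W i = map z [0..<L]" unfolding W_def i_def by simp
    define x where "x = pt i 0 (\<lambda>_. False)"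
    have "x \<in> Pi\<^sub>E UNIV U"
    proof (simp add: PiE_iff, intro allI)
      fix n show "x n \<in> U n"
      proof (cases "U n = UNIV")
        case False
        then have "n < L" using L by auto
        then have "x n = z n" unfolding x_def pt_eq X_def Wi by simp
        then show ?thesis using U(2) by (simp add: PiE_iff)
      qed simp
    qed
    then have "x \<in> T" using U(3) by blast
    moreover have "x \<in> S" unfolding S_def x_def by blast
    ultimately show "S \<inter> T \<noteq> {}" by blast
  qed
  have inv: "shift ` S \<subseteq> S"
  proof
    fix y assume "y \<in> shift ` S"
    then obtain i k b where "y = shift (pt i k b)" unfolding S_def by auto
    then have "y = pt i (Suc k) b" unfolding pt_def by simp
    then show "y \<in> S" unfolding S_def by blast
  qed
  have scr: "banach_scrambled S"
    unfolding banach_scrambled_def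
  proof (intro conjI ballI impI)
    have "(0::nat, 0::nat, (\<lambda>_. False)) \<noteq> (0, 1, (\<lambda>_. False))" by simp
    then obtain n where "pt 0 0 (\<lambda>_. False) n \<noteq> pt 0 1 (\<lambda>_. False) n"
      using differ[where i=0 and i'=0 and k=0 and k'=1 and b="\<lambda>_. False" and b'="\<lambda>_. False" and N=0] by auto
    then have "pt 0 0 (\<lambda>_. False) \<noteq> pt 0 1 (\<lambda>_. False)" by auto
    then show "\<exists>x\<in>S. \<exists>y\<in>S. x \<noteq> y" unfolding S_def by blast
  next
    fix x y assume x: "x \<in> S" and y: "y \<in> S" and ne: "x \<noteq> y"
    from x obtain i k b where xe: "x = pt i k b" unfolding S_def by auto
    from y obtain i' k' b' where ye: "y = pt i' k' b'" unfolding S_def by auto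
    show "banach_proximal x y" unfolding xe ye by (rule proximal)
    have "(i,k,b) \<noteq> (i',k',b')" using ne xe ye by auto
    then have "\<forall>N. \<exists>n\<ge>N. pt i k b n \<noteq> pt i' k' b' n" by (intro allI, rule differ)
    then show "\<not> asymptotic x y" unfolding xe ye by (rule not_asym)
  qed
  show ?thesis using myc dense inv scr by blast
qed
end
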